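(* Let $\tau$ be a representation of a Lie group $\mathbf{G}\subseteq\mathrm{GL}(D)$ on $\mathbb{K}^N$ ($\mathbb{K}\in\{\mathbb{R},\mathbb{C}\}$) and let $\mathcal{D}_B=\sum_{j=1}^DB_j\partial/\partial x_j+mE$ be covariant with respect to $\tau$, with symbol $\sigma_{\mathcal{D}_B}(p_1,\dots,p_D)=i\sum_{j=1}^DB_jp_j$. (a) If $\mathbf{G}\subseteq\mathrm{O}(D)$, the form of $\sigma_{\mathcal{D}_B}$ does not change under the simultaneous coordinate transformations $x\mapsto gx$ in $\mathbb{R}^D$ and $y\mapsto\tau(g)y$ in $\mathbb{K}^N$; that is, $\sigma_{\mathcal{D}_B}(gp)=\tau(g)\,\sigma_{\mathcal{D}_B}(p)\,\tau(g)^{-1}$ for all $g\in\mathbf{G}$, $p\in\mathbb{R}^D$. (b) If $\mathbf{G}$ is $\mathrm{SO}(D)$ or $\mathrm{O}(D)$, then $\det\sigma_{\mathcal{D}_B}(p_1,\dots,p_D)=C\,(p_1^2+\dots+p_D^2)^n$ for some constant $C\in\mathbb{C}$ and $n\in\mathbb{N}$; moreover, if $N$ is odd then $C=0$ (so elliptic operators covariant with respect to a representation of $\mathrm{SO}(D)$ or $\mathrm{O}(D)$ can exist only if $N$ is even).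
   Context: $E$ is the $N\times N$ identity matrix, $m\in\mathbb{R}$, $B_j\in M_{N\times N}(\mathbb{K})$. Covariance of $\mathcal{D}_B$ with respect to $\tau$ means $\sum_{k=1}^D g_{jk}\,\tau(g)B_k\tau(g^{-1})=B_j$ for all $j$ and all $g\in\mathbf{G}$ ($g_{jk}$ the entries of $g$). *)

theory Defs
  imports "HOL-Analysis.Analysis"
begin

definition O_group :: "(real^'d^'d) set" where
  "O_group = {g. orthogonal_matrix g}"

definition SO_group :: "(real^'d^'d) set" where
  "SO_group = {g. rotation_matrix g}"

definition is_matrix_group :: "(real^'d^'d) set \<Rightarrow> bool" where
  "is_matrix_group G \<longleftrightarrow> mat 1 \<in> G \<and> (\<forall>g\<in>G. invertible g \<and> matrix_inv g \<in> G)
     \<and> (\<forall>g\<in>G. \<forall>h\<in>G. g ** h \<in> G)"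

definition is_representation ::
  "(real^'d^'d) set \<Rightarrow> (real^'d^'d \<Rightarrow> complex^'n^'n) \<Rightarrow> bool" where
  "is_representation G \<tau> \<longleftrightarrow> is_matrix_group G \<and> \<tau> (mat 1) = mat 1
     \<and> (\<forall>g\<in>G. \<forall>h\<in>G. \<tau> (g ** h) = \<tau> g ** \<tau> h) \<and> continuous_on G \<tau>"

text \<open>Covariance of D_B = sum_j B_j d/dx_j + m E with respect to tau:
  sum_k g_jk tau(g) B_k tau(g^{-1}) = B_j for all j and all g in G.\<close>
definition covariant ::
  "(real^'d^'d) set \<Rightarrow> (real^'d^'d \<Rightarrow> complex^'n^'n) \<Rightarrow> ('d \<Rightarrow> complex^'n^'n) \<Rightarrow> bool" where
  "covariant G \<tau> B \<longleftrightarrow> (\<forall>g\<in>G. \<forall>j.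
     (\<chi> a b. \<Sum>k\<in>UNIV. complex_of_real (g $ j $ k) * (\<tau> g ** B k ** \<tau> (matrix_inv g)) $ a $ b) = B j)"

definition symbol :: "('d \<Rightarrow> complex^'n^'n) \<Rightarrow> real^'d \<Rightarrow> complex^'n^'n" where
  "symbol B p = (\<chi> a b. \<i> * (\<Sum>j\<in>UNIV. complex_of_real (p $ j) * B j $ a $ b))"

end

theory Submission imports Defs begin

lemma minv_props:
  fixes A :: "'a::semiring_1^'n^'m"
  assumes "invertible A"
  shows "A ** matrix_inv A = mat 1" "matrix_inv A ** A = mat 1"
  using someI_ex[OF assms[unfolded invertible_def]] unfolding matrix_inv_def by auto

lemma minv_unique:
  fixes A :: "'a::comm_semiring_1^'n^'n"
  assumes "A ** A' = mat 1" "A' ** A = mat 1"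
  shows "matrix_inv A = A'"
proof -
  have inv: "invertible A" using assms unfolding invertible_def by blast
  have "matrix_inv A = matrix_inv A ** (A ** A')" using assms by simp
  also have "\<dots> = (matrix_inv A ** A) ** A'" by (simp add: matrix_mul_assoc)
  also have "\<dots> = A'" using minv_props[OF inv] by simp
  finally show ?thesis .
qed

lemma lin_mult:
  fixes X Z :: "complex^'n^'n" and Y :: "'d \<Rightarrow> complex^'n^'n"
  shows "X ** (\<chi> a b. \<Sum>l\<in>UNIV. c l * Y l $ a $ b) ** Z
      = (\<chi> a b. \<Sum>l\<in>UNIV. c l * (X ** Y l ** Z) $ a $ b)"
proof -
  have "(\<Sum>m\<in>UNIV. (\<Sum>k\<in>UNIV. X$a$k * (\<Sum>l\<in>UNIV. c l * Y l $ k $ m)) * Z$m$b)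
      = (\<Sum>l\<in>UNIV. c l * (\<Sum>m\<in>UNIV. (\<Sum>k\<in>UNIV. X$a$k * Y l $ k $ m) * Z$m$b))" for a b
  proof -
    have "(\<Sum>m\<in>UNIV. (\<Sum>k\<in>UNIV. X$a$k * (\<Sum>l\<in>UNIV. c l * Y l $ k $ m)) * Z$m$b)
       = (\<Sum>m\<in>UNIV. \<Sum>k\<in>UNIV. \<Sum>l\<in>UNIV. c l * (X$a$k * Y l $ k $ m * Z$m$b))"
      by (simp add: sum_distrib_left sum_distrib_right mult.assoc mult.left_commute)
    also have "\<dots> = (\<Sum>m\<in>UNIV. \<Sum>l\<in>UNIV. \<Sum>k\<in>UNIV. c l * (X$a$k * Y l $ k $ m * Z$m$b))"
      by (rule sum.cong[OF refl], rule sum.swap)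
    also have "\<dots> = (\<Sum>l\<in>UNIV. \<Sum>m\<in>UNIV. \<Sum>k\<in>UNIV. c l * (X$a$k * Y l $ k $ m * Z$m$b))"
      by (rule sum.swap)
    also have "\<dots> = (\<Sum>l\<in>UNIV. c l * (\<Sum>m\<in>UNIV. (\<Sum>k\<in>UNIV. X$a$k * Y l $ k $ m) * Z$m$b))"
      by (simp add: sum_distrib_left sum_distrib_right mult.assoc)
    finally show ?thesis .
  qed
  then show ?thesis by (simp add: vec_eq_iff matrix_matrix_mult_def)
qed

lemma symbol_alt: "symbol B p = (\<chi> a b. \<Sum>l\<in>UNIV. (\<i> * complex_of_real (p $ l)) * B l $ a $ b)"
  by (simp add: symbol_def sum_distrib_left mult.assoc)

lemma det_mat_k: "det (mat k :: 'a::comm_ring_1^'n^'n) = k ^ CARD('n)"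
  by (simp add: det_diagonal mat_def)

lemma mat_mult_entry: "(mat c ** (A::'a::comm_semiring_1^'n^'m)) $ i $ j = c * A $ i $ j"
  by (simp add: matrix_matrix_mult_def mat_def if_distrib[of "\<lambda>x. x * _"] cong: if_cong)

lemma symbol_scale: "symbol B (c *\<^sub>R p) = mat (complex_of_real c) ** symbol B p"
  by (simp add: symbol_def vec_eq_iff mat_mult_entry sum_distrib_left
      mult.left_commute mult.assoc)

lemma norm_sq: "(norm (p::real^'d))^2 = (\<Sum>j\<in>UNIV. (p $ j)^2)"
proof -
  have "(norm p)^2 = inner p p" by (rule power2_norm_eq_inner)
  then show ?thesis by (simp add: inner_vec_def power2_eq_square)
qed


theorem lemma2p7:
  fixes G :: "(real^'d^'d) set"
    and \<tau> :: "real^'d^'d \<Rightarrow> complex^'n^'n"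
    and B :: "'d \<Rightarrow> complex^'n^'n"
  assumes rep: "is_representation G \<tau>"
    and cov: "covariant G \<tau> B"
  shows "(G \<subseteq> O_group \<longrightarrow>
           (\<forall>g\<in>G. \<forall>p. symbol B (g *v p) = \<tau> g ** symbol B p ** matrix_inv (\<tau> g)))
       \<and> ((G = O_group \<or> (G = SO_group \<and> CARD('d) \<ge> 2)) \<longrightarrow>
           (\<exists>(C::complex) (n::nat).
              (\<forall>p. det (symbol B p) = C * complex_of_real ((\<Sum>j\<in>UNIV. (p $ j)^2) ^ n))
            \<and> (odd CARD('n) \<longrightarrow> C = 0)))"
proof -
  have grp: "is_matrix_group G" and t1: "\<tau> (mat 1) = mat 1"
    and thom: "\<And>g h. g\<in>G \<Longrightarrow> h\<in>G \<Longrightarrow> \<tau> (g ** h) = \<tau> g ** \<tau> h"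
    using rep unfolding is_representation_def by auto
  have Ginv: "\<And>g. g \<in> G \<Longrightarrow> invertible g \<and> matrix_inv g \<in> G"
    using grp unfolding is_matrix_group_def by auto
  have tinv: "\<tau> g ** \<tau> (matrix_inv g) = mat 1 \<and> matrix_inv (\<tau> g) = \<tau> (matrix_inv g)" if g: "g \<in> G" for g
  proof -
    have inv: "invertible g" "matrix_inv g \<in> G" using Ginv[OF g] by auto
    have a: "\<tau> g ** \<tau> (matrix_inv g) = mat 1"
      using thom[OF g inv(2)] minv_props[OF inv(1)] t1 by simp
    have b: "\<tau> (matrix_inv g) ** \<tau> g = mat 1"
      using thom[OF inv(2) g] minv_props[OF inv(1)] t1 by simp
    show ?thesis using a minv_unique[OF a b] by simp
  qed
  have partA: "symbol B (g *v p) = \<tau> g ** symbol B p ** matrix_inv (\<tau> g)"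
    if g: "g \<in> G" and og: "orthogonal_matrix g" for g p
  proof -
    define M where "M k = \<tau> g ** B k ** \<tau> (matrix_inv g)" for k
    have covg: "B j $ a $ b = (\<Sum>k\<in>UNIV. complex_of_real (g$j$k) * M k $ a $ b)" for j a b
    proof -
      have "(\<chi> a b. \<Sum>k\<in>UNIV. complex_of_real (g $ j $ k) * M k $ a $ b) = B j"
        using cov[unfolded covariant_def, rule_format, OF g, of j] unfolding M_def .
      from arg_cong[OF this, of "\<lambda>X. X $ a $ b"] show ?thesis by simp
    qed
    have orth: "(\<Sum>j\<in>UNIV. g$j$l * g$j$k) = (if l = k then 1 else 0)" for l k
    proof -
      have "(transpose g ** g) $ l $ k = mat 1 $ l $ k" using og unfolding orthogonal_matrix_def by simp
      then show ?thesis by (simp add: matrix_matrix_mult_def transpose_def mat_def)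
    qed
    have "symbol B (g *v p) $ a $ b = (\<tau> g ** symbol B p ** matrix_inv (\<tau> g)) $ a $ b" for a b
    proof -
      have "symbol B (g *v p) $ a $ b
          = \<i> * (\<Sum>j\<in>UNIV. complex_of_real (\<Sum>l\<in>UNIV. g$j$l * p$l) * B j $ a $ b)"
        by (simp add: symbol_def matrix_vector_mult_def)
      also have "\<dots> = \<i> * (\<Sum>j\<in>UNIV. \<Sum>l\<in>UNIV. \<Sum>k\<in>UNIV.
            complex_of_real (p$l) * (complex_of_real (g$j$l * g$j$k) * M k $ a $ b))"
      proof -
        have "complex_of_real (\<Sum>l\<in>UNIV. g$j$l * p$l) * B j $ a $ b
          = (\<Sum>l\<in>UNIV. \<Sum>k\<in>UNIV.
            complex_of_real (p$l) * (complex_of_real (g$j$l * g$j$k) * M k $ a $ b))" for j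
        proof -
          have "complex_of_real (\<Sum>l\<in>UNIV. g$j$l * p$l) * B j $ a $ b
           = (\<Sum>k\<in>UNIV. \<Sum>l\<in>UNIV.
            complex_of_real (p$l) * (complex_of_real (g$j$l * g$j$k) * M k $ a $ b))"
            by (simp add: covg sum_distrib_left sum_distrib_right mult_ac)
          also have "\<dots> = (\<Sum>l\<in>UNIV. \<Sum>k\<in>UNIV.
            complex_of_real (p$l) * (complex_of_real (g$j$l * g$j$k) * M k $ a $ b))"
            by (rule sum.swap)
          finally show ?thesis .
        qed
        then show ?thesis by simp
      qed
      also have "\<dots> = \<i> * (\<Sum>l\<in>UNIV. \<Sum>j\<in>UNIV. \<Sum>k\<in>UNIV.
            complex_of_real (p$l) * (complex_of_real (g$j$l * g$j$k) * M k $ a $ b))"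
        by (subst sum.swap, rule refl)
      also have "\<dots> = \<i> * (\<Sum>l\<in>UNIV. \<Sum>k\<in>UNIV. \<Sum>j\<in>UNIV.
            complex_of_real (p$l) * (complex_of_real (g$j$l * g$j$k) * M k $ a $ b))"
        by (subst (2) sum.swap, rule refl)
      also have "\<dots> = \<i> * (\<Sum>l\<in>UNIV. \<Sum>k\<in>UNIV.
            complex_of_real (p$l) * (complex_of_real (\<Sum>j\<in>UNIV. g$j$l * g$j$k) * M k $ a $ b))"
        by (simp add: sum_distrib_left sum_distrib_right)
      also have "\<dots> = \<i> * (\<Sum>l\<in>UNIV. complex_of_real (p$l) * M l $ a $ b)"
      proof -
        have d: "complex_of_real (p$l) * (complex_of_real (if l = k then 1 else 0) * M k $ a $ b)
           = (if l = k then complex_of_real (p$l) * M k $a$b else 0)" for l k by simp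
        show ?thesis unfolding orth d by simp
      qed
      also have "\<dots> = (\<Sum>l\<in>UNIV. (\<i> * complex_of_real (p$l)) * M l $ a $ b)"
        by (simp add: sum_distrib_left mult.assoc)
      also have "\<dots> = (\<tau> g ** symbol B p ** matrix_inv (\<tau> g)) $ a $ b"
        unfolding symbol_alt tinv[OF g, THEN conjunct2] lin_mult M_def by simp
      finally show ?thesis .
    qed
    then show ?thesis by (simp add: vec_eq_iff)
  qed
  show ?thesis
  proof (intro conjI impI)
    assume "G \<subseteq> O_group"
    then show "\<forall>g\<in>G. \<forall>p. symbol B (g *v p) = \<tau> g ** symbol B p ** matrix_inv (\<tau> g)"
      using partA unfolding O_group_def by blast
  next
    assume Gc: "G = O_group \<or> (G = SO_group \<and> CARD('d) \<ge> 2)"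
    have Gorth: "orthogonal_matrix g" if "g \<in> G" for g
      using Gc that unfolding O_group_def SO_group_def rotation_matrix_def by auto
    define f where "f p = det (symbol B p)" for p
    have finv: "f (g *v p) = f p" if g: "g \<in> G" for g p
    proof -
      have "f (g *v p) = det (\<tau> g) * f p * det (matrix_inv (\<tau> g))"
        unfolding f_def partA[OF g Gorth[OF g]] by (simp add: det_mul)
      also have "\<dots> = f p * det (\<tau> g ** matrix_inv (\<tau> g))"
        by (simp add: det_mul)
      also have "\<dots> = f p" using tinv[OF g] by simp
      finally show ?thesis .
    qed
    have fhom: "f (c *\<^sub>R p) = complex_of_real c ^ CARD('n) * f p" for c p
      unfolding f_def symbol_scale by (simp add: det_mul det_mat_k)
    have trans: "\<exists>g\<in>G. g *v q = p" if nq: "norm q = norm p" for p q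
      using Gc
    proof
      assume G: "G = O_group"
      obtain h where h: "orthogonal_transformation h" "h q = p"
        using orthogonal_transformation_exists[OF nq] by blast
      have "matrix h \<in> G" using h(1) G unfolding O_group_def
        by (simp add: orthogonal_transformation_matrix)
      moreover have "matrix h *v q = p" using h
        by (simp add: matrix_works orthogonal_transformation_linear)
      ultimately show ?thesis by blast
    next
      assume G: "G = SO_group \<and> CARD('d) \<ge> 2"
      obtain h where h: "orthogonal_transformation h" "det (matrix h) = 1" "h q = p"
        using rotation_exists[of q p] G nq by blast
      have "matrix h \<in> G" using h(1,2) G unfolding SO_group_def rotation_matrix_def
        by (simp add: orthogonal_transformation_matrix)
      moreover have "matrix h *v q = p" using h
        by (simp add: matrix_works orthogonal_transformation_linear)
      ultimately show ?thesis by blast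
    qed
    obtain k :: 'd where True by simp
    define e :: "real^'d" where "e = axis k 1"
    have ne: "norm e = 1" unfolding e_def by simp
    have key: "f p = complex_of_real (norm p) ^ CARD('n) * f e" for p
    proof -
      have "norm (norm p *\<^sub>R e) = norm p" using ne by simp
      then obtain g where g: "g \<in> G" "g *v (norm p *\<^sub>R e) = p" using trans by blast
      have "f p = f (norm p *\<^sub>R e)" using finv[OF g(1)] g(2) by metis
      then show ?thesis using fhom by simp
    qed
    show "\<exists>(C::complex) (n::nat).
              (\<forall>p. det (symbol B p) = C * complex_of_real ((\<Sum>j\<in>UNIV. (p $ j)^2) ^ n))
            \<and> (odd CARD('n) \<longrightarrow> C = 0)"
    proof (cases "even CARD('n)")
      case True
      then obtain n where n: "CARD('n) = 2 * n" by (auto elim: evenE)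
      have "det (symbol B p) = f e * complex_of_real ((\<Sum>j\<in>UNIV. (p $ j)^2) ^ n)" for p
      proof -
        have "complex_of_real (norm p) ^ CARD('n) = complex_of_real (((norm p)^2) ^ n)"
          unfolding n by (simp add: power_mult)
        then show ?thesis using key[of p] unfolding f_def norm_sq by (simp add: mult.commute)
      qed
      then show ?thesis using True by blast
    next
      case False
      have "norm e = norm (- e)" by simp
      then obtain g where g: "g \<in> G" "g *v e = - e" using trans by blast
      have "f (- e) = f e" using finv[OF g(1)] g(2) by metis
      moreover have "f (- e) = - f e"
        using fhom[of "-1" e] False by simp
      ultimately have fe: "f e = 0" by simp
      have "det (symbol B p) = 0 * complex_of_real ((\<Sum>j\<in>UNIV. (p $ j)^2) ^ 0)" for p
        using key[of p] fe unfolding f_def by simp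
      then show ?thesis by blast
    qed
  qed
qed

end
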